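(* Let $A$ be a partial magma and $R$ an equivalence relation on $A$ in the category of partial magmas. Then $R$ is effective if and only if it is additive.
   Context: A partial magma is a set $A$ with a distinguished element $0$, a subset $A_2\subseteq A\times A$ of summable pairs and a map $+\colon A_2\to A$, such that $(0,a),(a,0)\in A_2$ and $a+0=0+a=a$ for all $a$, and $(a,b)\in A_2$ implies $(b,a)\in A_2$ and $a+b=b+a$. A homomorphism of partial magmas is a map $f$ with $f(0)=0$, $(f(a_1),f(a_2))\in B_2$ and $f(a_1+a_2)=f(a_1)+f(a_2)$ for $(a_1,a_2)\in A_2$. The product $A\times A$ is the partial magma in which $((a,b),(c,d))$ is summable iff $(a,c)\in A_2$ and $(b,d)\in A_2$, with componentwise sum. A partial submagma of a partial magma $C$ is a subset $D\ni 0$ with a set $D_2\subseteq C_2\cap(D\times D)$ containing all $(0,d),(d,0)$, closed under swapping, such that sums of pairs in $D_2$ lie in $D$. An equivalence relation on $A$ is a partial submagma $R$ of $A\times A$ such that for every partial magma $X$, the set of homomorphisms $X\to R$ is an equivalence relation on the set of homomorphisms $X\to A$ (via $\mathrm{Hom}(X,R)\subseteq \mathrm{Hom}(X,A)\times\mathrm{Hom}(X,A)$). $R$ is effective if there is a homomorphism $f\colon A\to B$ of partial magmas such that $R\rightrightarrows A$ is its kernel pair, i.e. $R=\{(a,a'):f(a)=f(a')\}$ and $R_2$ consists of all pairs of elements of $R$ that are summable in $A\times A$. $R$ is additive if $R_2=(R\times R)\cap(A\times A)_2$. *)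

theory Defs
  imports Main
begin

text \<open>A partial magma: carrier set, distinguished zero, set of summable pairs,
  and a sum operation (only meaningful on summable pairs).\<close>

record 'a pmagma =
  pm_carrier :: "'a set"
  pm_zero :: 'a
  pm_sums :: "('a \<times> 'a) set"
  pm_add :: "'a \<Rightarrow> 'a \<Rightarrow> 'a"

definition partial_magma :: "('a, 'm) pmagma_scheme \<Rightarrow> bool" where
  "partial_magma A \<longleftrightarrow>
     pm_zero A \<in> pm_carrier A \<and>
     pm_sums A \<subseteq> pm_carrier A \<times> pm_carrier A \<and>
     (\<forall>a\<in>pm_carrier A. (pm_zero A, a) \<in> pm_sums A \<and> (a, pm_zero A) \<in> pm_sums A \<and>
        pm_add A a (pm_zero A) = a \<and> pm_add A (pm_zero A) a = a) \<and>
     (\<forall>a b. (a, b) \<in> pm_sums A \<longrightarrow>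
        (b, a) \<in> pm_sums A \<and> pm_add A a b = pm_add A b a \<and> pm_add A a b \<in> pm_carrier A)"

definition pm_hom :: "('a, 'm) pmagma_scheme \<Rightarrow> ('b, 'n) pmagma_scheme \<Rightarrow> ('a \<Rightarrow> 'b) \<Rightarrow> bool" where
  "pm_hom A B f \<longleftrightarrow>
     (\<forall>a\<in>pm_carrier A. f a \<in> pm_carrier B) \<and>
     f (pm_zero A) = pm_zero B \<and>
     (\<forall>a1 a2. (a1, a2) \<in> pm_sums A \<longrightarrow>
        (f a1, f a2) \<in> pm_sums B \<and> f (pm_add A a1 a2) = pm_add B (f a1) (f a2))"

definition pm_square :: "('a, 'm) pmagma_scheme \<Rightarrow> ('a \<times> 'a) pmagma" where
  "pm_square A =
     \<lparr> pm_carrier = pm_carrier A \<times> pm_carrier A,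
       pm_zero = (pm_zero A, pm_zero A),
       pm_sums = {((a, b), (c, d)). (a, c) \<in> pm_sums A \<and> (b, d) \<in> pm_sums A},
       pm_add = (\<lambda>(a, b) (c, d). (pm_add A a c, pm_add A b d)) \<rparr>"

definition pm_sub :: "('c, 'm) pmagma_scheme \<Rightarrow> 'c set \<Rightarrow> ('c \<times> 'c) set \<Rightarrow> 'c pmagma" where
  "pm_sub C D D2 = \<lparr> pm_carrier = D, pm_zero = pm_zero C, pm_sums = D2, pm_add = pm_add C \<rparr>"

definition partial_submagma :: "('c, 'm) pmagma_scheme \<Rightarrow> 'c set \<Rightarrow> ('c \<times> 'c) set \<Rightarrow> bool" where
  "partial_submagma C D D2 \<longleftrightarrow>
     D \<subseteq> pm_carrier C \<and> pm_zero C \<in> D \<and>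
     D2 \<subseteq> pm_sums C \<inter> (D \<times> D) \<and>
     (\<forall>d\<in>D. (pm_zero C, d) \<in> D2 \<and> (d, pm_zero C) \<in> D2) \<and>
     (\<forall>x y. (x, y) \<in> D2 \<longrightarrow> (y, x) \<in> D2) \<and>
     (\<forall>x y. (x, y) \<in> D2 \<longrightarrow> pm_add C x y \<in> D)"

text \<open>For a test partial magma X, Hom(X,R) (viewed inside Hom(X,A) \<times> Hom(X,A) by
  pairing) is an equivalence relation on Hom(X,A).\<close>

definition hom_equiv_at :: "('x, 'n) pmagma_scheme \<Rightarrow> ('a, 'm) pmagma_scheme
    \<Rightarrow> ('a \<times> 'a) set \<Rightarrow> (('a \<times> 'a) \<times> ('a \<times> 'a)) set \<Rightarrow> bool" where
  "hom_equiv_at X A Rc R2 \<longleftrightarrow>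
     (let R = pm_sub (pm_square A) Rc R2;
          rel = (\<lambda>f g. pm_hom X R (\<lambda>x. (f x, g x)))
      in (\<forall>f. pm_hom X A f \<longrightarrow> rel f f) \<and>
         (\<forall>f g. pm_hom X A f \<longrightarrow> pm_hom X A g \<longrightarrow> rel f g \<longrightarrow> rel g f) \<and>
         (\<forall>f g h. pm_hom X A f \<longrightarrow> pm_hom X A g \<longrightarrow> pm_hom X A h \<longrightarrow>
              rel f g \<longrightarrow> rel g h \<longrightarrow> rel f h))"

text \<open>HOL cannot quantify
  over all types inside a formula, so the test objects X range over all partial
  magmas whose carrier lives in the countably infinite type nat.\<close>

definition pm_equivalence_relation :: "('a, 'm) pmagma_scheme \<Rightarrow> ('a \<times> 'a) set
    \<Rightarrow> (('a \<times> 'a) \<times> ('a \<times> 'a)) set \<Rightarrow> bool" where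
  "pm_equivalence_relation A Rc R2 \<longleftrightarrow>
     partial_submagma (pm_square A) Rc R2 \<and>
     (\<forall>X :: nat pmagma. partial_magma X \<longrightarrow> hom_equiv_at X A Rc R2)"

text \<open>Effectiveness: R is the kernel pair of some homomorphism f : A \<rightarrow> B, where B
  is a partial magma whose carrier lives in the type given by the first argument.\<close>

definition effective_in :: "'b itself \<Rightarrow> ('a, 'm) pmagma_scheme \<Rightarrow> ('a \<times> 'a) set
    \<Rightarrow> (('a \<times> 'a) \<times> ('a \<times> 'a)) set \<Rightarrow> bool" where
  "effective_in _ A Rc R2 \<longleftrightarrow>
     (\<exists>(B :: 'b pmagma) f. partial_magma B \<and> pm_hom A B f \<and>
        Rc = {(a, a'). a \<in> pm_carrier A \<and> a' \<in> pm_carrier A \<and> f a = f a'} \<and>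
        R2 = {(p, q). p \<in> Rc \<and> q \<in> Rc \<and> (p, q) \<in> pm_sums (pm_square A)})"

definition pm_additive :: "('a, 'm) pmagma_scheme \<Rightarrow> ('a \<times> 'a) set
    \<Rightarrow> (('a \<times> 'a) \<times> ('a \<times> 'a)) set \<Rightarrow> bool" where
  "pm_additive A Rc R2 \<longleftrightarrow> R2 = (Rc \<times> Rc) \<inter> pm_sums (pm_square A)"

end

theory Submission
  imports Defs
begin

definition X1 :: "nat pmagma" where
  "X1 = \<lparr> pm_carrier = {0, 1}, pm_zero = 0, pm_sums = {(0,0),(0,1),(1,0)}, pm_add = (+) \<rparr>"

definition pt :: "('a, 'm) pmagma_scheme \<Rightarrow> 'a \<Rightarrow> nat \<Rightarrow> 'a" where
  "pt A a = (\<lambda>n. if n = 0 then pm_zero A else a)"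

lemma X1_pm: "partial_magma X1"
  unfolding partial_magma_def X1_def by auto

lemma pt_hom:
  assumes "partial_magma A" "a \<in> pm_carrier A"
  shows "pm_hom X1 A (pt A a)"
  using assms unfolding pm_hom_def X1_def pt_def partial_magma_def by auto

lemma pt_pair_hom:
  assumes "partial_magma A" "partial_submagma (pm_square A) Rc R2" "(a, b) \<in> Rc"
  shows "pm_hom X1 (pm_sub (pm_square A) Rc R2) (\<lambda>x. (pt A a x, pt A b x))"
proof -
  have sub: "Rc \<subseteq> pm_carrier A \<times> pm_carrier A" "(pm_zero A, pm_zero A) \<in> Rc"
    "\<forall>d\<in>Rc. ((pm_zero A, pm_zero A), d) \<in> R2 \<and> (d, (pm_zero A, pm_zero A)) \<in> R2"
    using assms(2) unfolding partial_submagma_def pm_square_def by auto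
  have ab: "a \<in> pm_carrier A" "b \<in> pm_carrier A" using sub assms(3) by auto
  have z: "pm_add A (pm_zero A) (pm_zero A) = pm_zero A" "pm_add A (pm_zero A) a = a"
    "pm_add A a (pm_zero A) = a" "pm_add A (pm_zero A) b = b" "pm_add A b (pm_zero A) = b"
    using assms(1) ab unfolding partial_magma_def by auto
  show ?thesis
    unfolding pm_hom_def X1_def pt_def pm_sub_def
    using sub assms(3) z by (auto simp: pm_square_def)
qed

lemma pt_pair_hom_D:
  assumes "pm_hom X1 (pm_sub (pm_square A) Rc R2) (\<lambda>x. (pt A a x, pt A b x))"
  shows "(a, b) \<in> Rc"
  using assms unfolding pm_hom_def X1_def pt_def pm_sub_def by auto

lemma he_E:
  assumes he: "hom_equiv_at X A Rc R2"
  shows "(\<forall>f. pm_hom X A f \<longrightarrow> pm_hom X (pm_sub (pm_square A) Rc R2) (\<lambda>x. (f x, f x))) \<and>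
         (\<forall>f g. pm_hom X A f \<longrightarrow> pm_hom X A g \<longrightarrow> pm_hom X (pm_sub (pm_square A) Rc R2) (\<lambda>x. (f x, g x)) \<longrightarrow> pm_hom X (pm_sub (pm_square A) Rc R2) (\<lambda>x. (g x, f x))) \<and>
         (\<forall>f g h. pm_hom X A f \<longrightarrow> pm_hom X A g \<longrightarrow> pm_hom X A h \<longrightarrow>
              pm_hom X (pm_sub (pm_square A) Rc R2) (\<lambda>x. (f x, g x)) \<longrightarrow> pm_hom X (pm_sub (pm_square A) Rc R2) (\<lambda>x. (g x, h x)) \<longrightarrow> pm_hom X (pm_sub (pm_square A) Rc R2) (\<lambda>x. (f x, h x)))"
  using he unfolding hom_equiv_at_def Let_def by (simp only:)

theorem mainTheorem4:
  fixes A :: "'a pmagma"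
    and Rc :: "('a \<times> 'a) set"
    and R2 :: "(('a \<times> 'a) \<times> ('a \<times> 'a)) set"
  assumes "partial_magma A"
    and "pm_equivalence_relation A Rc R2"
  shows "(pm_additive A Rc R2 \<longrightarrow> effective_in TYPE('a set) A Rc R2) \<and>
         (effective_in TYPE('b) A Rc R2 \<longrightarrow> pm_additive A Rc R2)"
proof
  have subm: "partial_submagma (pm_square A) Rc R2"
    using assms(2) unfolding pm_equivalence_relation_def by (rule conjunct1)
  have heall: "\<forall>X :: nat pmagma. partial_magma X \<longrightarrow> hom_equiv_at X A Rc R2"
    using assms(2) unfolding pm_equivalence_relation_def by (rule conjunct2)
  have he: "hom_equiv_at X1 A Rc R2"
    by (rule mp[OF spec[OF heall] X1_pm])
  have RcC: "Rc \<subseteq> pm_carrier A \<times> pm_carrier A"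
    using subm unfolding partial_submagma_def pm_square_def by auto
  have Rclos: "\<And>x y. (x, y) \<in> R2 \<Longrightarrow> pm_add (pm_square A) x y \<in> Rc"
    using subm unfolding partial_submagma_def by auto
  let ?rel = "\<lambda>f g. pm_hom X1 (pm_sub (pm_square A) Rc R2) (\<lambda>x. (f x, g x))"
  have E1: "\<And>f. pm_hom X1 A f \<Longrightarrow> ?rel f f"
    and E2: "\<And>f g. pm_hom X1 A f \<Longrightarrow> pm_hom X1 A g \<Longrightarrow> ?rel f g \<Longrightarrow> ?rel g f"
    and E3: "\<And>f g h. pm_hom X1 A f \<Longrightarrow> pm_hom X1 A g \<Longrightarrow> pm_hom X1 A h \<Longrightarrow>
              ?rel f g \<Longrightarrow> ?rel g h \<Longrightarrow> ?rel f h"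
    subgoal for f using conjunct1[OF he_E[OF he]] by blast
    subgoal for f g using conjunct1[OF conjunct2[OF he_E[OF he]]] by blast
    subgoal for f g h using conjunct2[OF conjunct2[OF he_E[OF he]]] by blast
    done
  have refl: "\<And>a. a \<in> pm_carrier A \<Longrightarrow> (a, a) \<in> Rc"
    by (rule pt_pair_hom_D, rule E1, rule pt_hom[OF assms(1)])
  have sym: "\<And>a b. (a, b) \<in> Rc \<Longrightarrow> (b, a) \<in> Rc"
  proof -
    fix a b assume h: "(a, b) \<in> Rc"
    then have "a \<in> pm_carrier A" "b \<in> pm_carrier A" using RcC by auto
    then have hb: "pm_hom X1 A (pt A a)" "pm_hom X1 A (pt A b)" using pt_hom[OF assms(1)] by auto
    have "?rel (pt A b) (pt A a)"
      using E2[OF hb pt_pair_hom[OF assms(1) subm h]] .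
    then show "(b, a) \<in> Rc" by (rule pt_pair_hom_D)
  qed
  have trans: "\<And>a b c. (a, b) \<in> Rc \<Longrightarrow> (b, c) \<in> Rc \<Longrightarrow> (a, c) \<in> Rc"
  proof -
    fix a b c assume h: "(a, b) \<in> Rc" "(b, c) \<in> Rc"
    then have "a \<in> pm_carrier A" "b \<in> pm_carrier A" "c \<in> pm_carrier A" using RcC by auto
    then have hb: "pm_hom X1 A (pt A a)" "pm_hom X1 A (pt A b)" "pm_hom X1 A (pt A c)"
      using pt_hom[OF assms(1)] by auto
    have "?rel (pt A a) (pt A c)"
      using E3[OF hb pt_pair_hom[OF assms(1) subm h(1)] pt_pair_hom[OF assms(1) subm h(2)]] .
    then show "(a, c) \<in> Rc" by (rule pt_pair_hom_D)
  qed
  define cls where "cls a = {b. (a, b) \<in> Rc}" for a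
  have cls_eq: "\<And>a b. a \<in> pm_carrier A \<Longrightarrow> b \<in> pm_carrier A \<Longrightarrow> cls a = cls b \<longleftrightarrow> (a, b) \<in> Rc"
  proof -
    fix a b assume ab: "a \<in> pm_carrier A" "b \<in> pm_carrier A"
    show "cls a = cls b \<longleftrightarrow> (a, b) \<in> Rc"
    proof
      assume "cls a = cls b"
      then show "(a, b) \<in> Rc" using refl[OF ab(2)] unfolding cls_def by auto
    next
      assume "(a, b) \<in> Rc"
      then show "cls a = cls b" unfolding cls_def using sym trans by blast
    qed
  qed
  have sumsC: "\<And>a c. (a, c) \<in> pm_sums A \<Longrightarrow> a \<in> pm_carrier A \<and> c \<in> pm_carrier A
      \<and> pm_add A a c \<in> pm_carrier A"
    using assms(1) unfolding partial_magma_def by blast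
  show "pm_additive A Rc R2 \<longrightarrow> effective_in TYPE('a set) A Rc R2"
  proof
    assume add: "pm_additive A Rc R2"
    have wd: "cls (pm_add A a c) = cls (pm_add A a' c')"
      if h: "(a, c) \<in> pm_sums A" "(a', c') \<in> pm_sums A" "cls a = cls a'" "cls c = cls c'"
      for a c a' c'
    proof -
      have car: "a \<in> pm_carrier A" "c \<in> pm_carrier A" "a' \<in> pm_carrier A" "c' \<in> pm_carrier A"
        "pm_add A a c \<in> pm_carrier A" "pm_add A a' c' \<in> pm_carrier A"
        using sumsC h by auto
      have r: "(a, a') \<in> Rc" "(c, c') \<in> Rc" using cls_eq car h by auto
      have "((a, a'), (c, c')) \<in> R2"
        using add r h(1,2) unfolding pm_additive_def pm_square_def by auto
      then have "(pm_add A a c, pm_add A a' c') \<in> Rc"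
        using Rclos unfolding pm_square_def by fastforce
      then show ?thesis using cls_eq car by auto
    qed
    define Sel where "Sel P Q = (SOME s. \<exists>a c. (a, c) \<in> pm_sums A \<and> cls a = P \<and> cls c = Q
        \<and> s = pm_add A a c)" for P Q
    define B :: "'a set pmagma" where "B = \<lparr> pm_carrier = cls ` pm_carrier A,
       pm_zero = cls (pm_zero A),
       pm_sums = {(cls a, cls c) | a c. (a, c) \<in> pm_sums A},
       pm_add = (\<lambda>P Q. cls (Sel P Q)) \<rparr>"
    have Badd: "pm_add B (cls a) (cls c) = cls (pm_add A a c)" if "(a, c) \<in> pm_sums A" for a c
    proof -
      have "\<exists>s. \<exists>a' c'. (a', c') \<in> pm_sums A \<and> cls a' = cls a \<and> cls c' = cls c
        \<and> s = pm_add A a' c'" using that by blast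
      then have "\<exists>a' c'. (a', c') \<in> pm_sums A \<and> cls a' = cls a \<and> cls c' = cls c
        \<and> Sel (cls a) (cls c) = pm_add A a' c'"
        unfolding Sel_def by (rule someI_ex)
      then obtain a' c' where h: "(a', c') \<in> pm_sums A" "cls a' = cls a" "cls c' = cls c"
        "Sel (cls a) (cls c) = pm_add A a' c'" by blast
      have "pm_add B (cls a) (cls c) = cls (Sel (cls a) (cls c))" by (simp add: B_def)
      also have "\<dots> = cls (pm_add A a' c')" using h(4) by simp
      also have "\<dots> = cls (pm_add A a c)" using wd[OF h(1) that h(2,3)] .
      finally show ?thesis .
    qed
    have zA: "\<And>a. a \<in> pm_carrier A \<Longrightarrow> (pm_zero A, a) \<in> pm_sums A \<and> (a, pm_zero A) \<in> pm_sums A \<and>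
        pm_add A a (pm_zero A) = a \<and> pm_add A (pm_zero A) a = a"
      and zc: "pm_zero A \<in> pm_carrier A"
      and cA: "\<And>a b. (a, b) \<in> pm_sums A \<Longrightarrow> (b, a) \<in> pm_sums A \<and> pm_add A a b = pm_add A b a"
      using assms(1) unfolding partial_magma_def by blast+
    have pmB: "partial_magma B"
      unfolding partial_magma_def
    proof (intro conjI ballI allI impI)
      show "pm_zero B \<in> pm_carrier B" unfolding B_def using zc by auto
      show "pm_sums B \<subseteq> pm_carrier B \<times> pm_carrier B" unfolding B_def using sumsC by auto
    next
      fix P assume "P \<in> pm_carrier B"
      then obtain a where a: "a \<in> pm_carrier A" "P = cls a" unfolding B_def by auto
      show "(pm_zero B, P) \<in> pm_sums B" unfolding B_def using a zA by auto
      show "(P, pm_zero B) \<in> pm_sums B" unfolding B_def using a zA by auto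
      show "pm_add B P (pm_zero B) = P"
        using Badd[of a "pm_zero A"] a zA by (simp add: B_def)
      show "pm_add B (pm_zero B) P = P"
        using Badd[of "pm_zero A" a] a zA by (simp add: B_def)
    next
      fix P Q assume "(P, Q) \<in> pm_sums B"
      then obtain a c where ac: "(a, c) \<in> pm_sums A" "P = cls a" "Q = cls c"
        unfolding B_def by auto
      show "(Q, P) \<in> pm_sums B" unfolding B_def using ac cA by auto
      have ca: "(c, a) \<in> pm_sums A" "pm_add A a c = pm_add A c a" using cA[OF ac(1)] by auto
      show "pm_add B P Q = pm_add B Q P"
        unfolding ac(2,3) Badd[OF ac(1)] Badd[OF ca(1)] ca(2) ..
      have "pm_add A a c \<in> pm_carrier A" using sumsC[OF ac(1)] by blast
      then show "pm_add B P Q \<in> pm_carrier B"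
        unfolding ac(2,3) Badd[OF ac(1)] by (simp add: B_def)
    qed
    have homB: "pm_hom A B cls"
      unfolding pm_hom_def
    proof (intro conjI ballI allI impI)
      show "\<And>a. a \<in> pm_carrier A \<Longrightarrow> cls a \<in> pm_carrier B" unfolding B_def by auto
      show "cls (pm_zero A) = pm_zero B" unfolding B_def by auto
      fix a1 a2 assume h: "(a1, a2) \<in> pm_sums A"
      show "(cls a1, cls a2) \<in> pm_sums B" unfolding B_def using h by auto
      show "cls (pm_add A a1 a2) = pm_add B (cls a1) (cls a2)" using Badd h by auto
    qed
    have Rc_eq: "Rc = {(a, a'). a \<in> pm_carrier A \<and> a' \<in> pm_carrier A \<and> cls a = cls a'}"
      using RcC cls_eq by auto
    have R2_eq: "R2 = {(p, q). p \<in> Rc \<and> q \<in> Rc \<and> (p, q) \<in> pm_sums (pm_square A)}"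
      using add unfolding pm_additive_def by auto
    show "effective_in TYPE('a set) A Rc R2"
      unfolding effective_in_def using pmB homB Rc_eq R2_eq by blast
  qed
next
  show "effective_in TYPE('b) A Rc R2 \<longrightarrow> pm_additive A Rc R2"
  proof
    assume "effective_in TYPE('b) A Rc R2"
    then have "R2 = {(p, q). p \<in> Rc \<and> q \<in> Rc \<and> (p, q) \<in> pm_sums (pm_square A)}"
      unfolding effective_in_def by blast
    then show "pm_additive A Rc R2" unfolding pm_additive_def by blast
  qed
qed

end
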